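(* An auction mechanism $(\pi,x)$ with display prices is incentive compatible if and only if for every advertiser $i$, every display price profile $\mathbf{p}$ and every cost-report profile $\mathbf{c}'_{-i}$ of the others: (1) $c_i\mapsto\pi_i(c_i,\mathbf{c}'_{-i},\mathbf{p})$ is non-increasing on $[\underline{c}_i,\overline{c}_i]$; and (2) there is a quantity $U_i(\mathbf{c}'_{-i},\mathbf{p})$ not depending on $i$'s cost report such that for all $c_i\in[\underline{c}_i,\overline{c}_i]$, $$x_i(c_i,\mathbf{c}'_{-i},\mathbf{p})=v_i(c_i,p_i)\pi_i(c_i,\mathbf{c}'_{-i},\mathbf{p})-\lambda_i(p_i)\int_{c_i}^{\overline{c}_i}\pi_i(z,\mathbf{c}'_{-i},\mathbf{p})\,dz-U_i(\mathbf{c}'_{-i},\mathbf{p}).$$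
   Context: There are advertisers $N=\{1,\dots,n\}$ competing for a single ad slot. Advertiser $i$ has a private product cost $c_i\in[\underline{c}_i,\overline{c}_i]$ and sets a display price $p_i$. Her conversion-rate function is $\lambda_i:\mathbb{R}\to(0,1]$, and her value when displayed at price $p_i$ is $v_i(c_i,p_i)=(p_i-c_i)\lambda_i(p_i)$. Each advertiser reports a cost $c_i'\in[\underline{c}_i,\overline{c}_i]$ and a display price $p_i$; write $\mathbf{c}'=(c_i',\mathbf{c}'_{-i})$, $\mathbf{p}=(p_i,\mathbf{p}_{-i})$. An auction mechanism $(\pi,x)$ consists of allocation functions $\pi_i(\mathbf{c}',\mathbf{p})\in\{0,1\}$ (at most one advertiser wins the slot) and payment functions $x_i(\mathbf{c}',\mathbf{p})\in\mathbb{R}$. The utility of advertiser $i$ with true cost $c_i$ is $u_i(c_i,\mathbf{c}',\mathbf{p})=v_i(c_i,p_i)\pi_i(\mathbf{c}',\mathbf{p})-x_i(\mathbf{c}',\mathbf{p})$. The mechanism is incentive compatible (IC) if for all $i$, all $c_i$, all $\mathbf{p}$ and all $\mathbf{c}'$: $u_i(c_i,(c_i,\mathbf{c}'_{-i}),\mathbf{p})\ge u_i(c_i,(c_i',\mathbf{c}'_{-i}),\mathbf{p})$. *)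

theory Defs
  imports "HOL-Analysis.Analysis"
begin

text \<open>Advertisers are the elements of a finite type 'a.
 Allocation pi i c p (real-valued, in {0,1}), payment x i c p.\<close>

definition adv_value :: "('a \<Rightarrow> real \<Rightarrow> real) \<Rightarrow> 'a \<Rightarrow> real \<Rightarrow> real \<Rightarrow> real" where
  "adv_value lam i ci pr = (pr - ci) * lam i pr"

definition utility ::
  "('a \<Rightarrow> real \<Rightarrow> real) \<Rightarrow> ('a \<Rightarrow> ('a \<Rightarrow> real) \<Rightarrow> ('a \<Rightarrow> real) \<Rightarrow> real)
   \<Rightarrow> ('a \<Rightarrow> ('a \<Rightarrow> real) \<Rightarrow> ('a \<Rightarrow> real) \<Rightarrow> real)
   \<Rightarrow> 'a \<Rightarrow> real \<Rightarrow> ('a \<Rightarrow> real) \<Rightarrow> ('a \<Rightarrow> real) \<Rightarrow> real" where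
  "utility lam alloc pay i ci c' p = adv_value lam i ci (p i) * alloc i c' p - pay i c' p"

definition cost_profile :: "('a \<Rightarrow> real) \<Rightarrow> ('a \<Rightarrow> real) \<Rightarrow> ('a \<Rightarrow> real) \<Rightarrow> bool" where
  "cost_profile lo hi c' \<longleftrightarrow> (\<forall>j. c' j \<in> {lo j..hi j})"

definition auction_mechanism ::
  "('a \<Rightarrow> real) \<Rightarrow> ('a \<Rightarrow> real) \<Rightarrow> ('a \<Rightarrow> ('a \<Rightarrow> real) \<Rightarrow> ('a \<Rightarrow> real) \<Rightarrow> real) \<Rightarrow> bool" where
  "auction_mechanism lo hi alloc \<longleftrightarrow>
     (\<forall>c' p. cost_profile lo hi c' \<longrightarrow>
        (\<forall>i. alloc i c' p \<in> {0, 1}) \<and> card {i. alloc i c' p = 1} \<le> 1)"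

definition incentive_compatible ::
  "('a \<Rightarrow> real) \<Rightarrow> ('a \<Rightarrow> real) \<Rightarrow> ('a \<Rightarrow> real \<Rightarrow> real)
   \<Rightarrow> ('a \<Rightarrow> ('a \<Rightarrow> real) \<Rightarrow> ('a \<Rightarrow> real) \<Rightarrow> real)
   \<Rightarrow> ('a \<Rightarrow> ('a \<Rightarrow> real) \<Rightarrow> ('a \<Rightarrow> real) \<Rightarrow> real) \<Rightarrow> bool" where
  "incentive_compatible lo hi lam alloc pay \<longleftrightarrow>
     (\<forall>i ci p c'. ci \<in> {lo i..hi i} \<longrightarrow> cost_profile lo hi c' \<longrightarrow>
        utility lam alloc pay i ci (c'(i := ci)) p \<ge> utility lam alloc pay i ci c' p)"

end

theory Submission imports Defs begin

lemma eps_le: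
  fixes X K d :: real
  assumes "d > 0" "K \<ge> 0" "\<And>e. 0 < e \<Longrightarrow> e < d \<Longrightarrow> X \<le> K * e"
  shows "X \<le> 0"
proof (rule ccontr)
  assume "\<not> X \<le> 0"
  hence X: "X > 0" by simp
  define e where "e = min (d/2) (X / (2*(K+1)))"
  have e: "0 < e" "e < d" using X assms(1,2) by (auto simp: e_def)
  have "X \<le> K * e" using assms(3) e by blast
  also have "\<dots> \<le> K * (X / (2*(K+1)))" using assms(2) by (intro mult_left_mono) (auto simp: e_def)
  also have "\<dots> = X * (K / (2*(K+1)))" by simp
  also have "\<dots> < X * 1"
  proof (rule mult_strict_left_mono[OF _ X])
    show "K / (2*(K+1)) < 1" using assms(2) by (simp add: divide_less_eq)
  qed
  also have "\<dots> = X" by simp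
  finally show False by simp
qed

lemma threshold:
  fixes f :: "real \<Rightarrow> real"
  assumes "lo \<le> hi" "\<And>z. z \<in> {lo..hi} \<Longrightarrow> f z \<in> {0,1}" "antimono_on {lo..hi} f"
  shows "\<exists>t\<in>{lo..hi}. (\<forall>z\<in>{lo..hi}. z < t \<longrightarrow> f z = 1) \<and> (\<forall>z\<in>{lo..hi}. t < z \<longrightarrow> f z = 0)"
proof -
  define S where "S = {z\<in>{lo..hi}. f z = 1}"
  show ?thesis
  proof (cases "S = {}")
    case True
    show ?thesis using True assms(1,2) by (intro bexI[of _ lo]) (auto simp: S_def)
  next
    case False
    have bdd: "bdd_above S" unfolding S_def by (rule bdd_aboveI[of _ hi]) auto
    define t where "t = Sup S"
    have tle: "t \<le> hi" unfolding t_def using False by (intro cSup_least) (auto simp: S_def)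
    obtain s where s: "s \<in> S" using False by auto
    have tge: "lo \<le> t" using s cSup_upper[OF s bdd] by (auto simp: S_def t_def)
    have A: "f z = 1" if zin: "z\<in>{lo..hi}" and zlt: "z < t" for z
    proof -
      obtain s where "s \<in> S" "z < s" using less_cSupD[OF False] zlt t_def by blast
      hence "f s \<le> f z" using monotone_onD[OF assms(3), of z s] zin by (auto simp: S_def)
      thus ?thesis using \<open>s \<in> S\<close> assms(2)[OF zin] by (auto simp: S_def)
    qed
    have B: "f z = 0" if "z\<in>{lo..hi}" "t < z" for z
    proof -
      have "z \<notin> S" using cSup_upper[OF _ bdd, of z] that t_def by auto
      thus ?thesis using assms(2)[OF that(1)] that(1) by (auto simp: S_def)
    qed
    show ?thesis apply (rule bexI[of _ t]) using A B tle tge by auto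
  qed
qed

lemma integral_thr:
  fixes f :: "real \<Rightarrow> real"
  assumes "t \<in> {lo..hi}" "\<forall>z\<in>{lo..hi}. z < t \<longrightarrow> f z = 1" "\<forall>z\<in>{lo..hi}. t < z \<longrightarrow> f z = 0"
    and c: "c \<in> {lo..hi}"
  shows "integral {c..hi} f = max 0 (t - c)"
proof -
  have "integral {c..hi} f = integral {c..hi} (\<lambda>z. if z \<in> {c..t} then (1::real) else 0)"
    apply (rule integral_spike[of "{t}"])
    using assms by auto
  also have "\<dots> = integral ({c..t} \<inter> {c..hi}) (\<lambda>z. 1::real)"
    by (rule integral_restrict_Int)
  also have "{c..t} \<inter> {c..hi} = {c..t}" using assms(1) by auto
  also have "integral {c..t} (\<lambda>z. 1::real) = max 0 (t - c)" by simp
  finally show ?thesis .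
qed


lemma key_fwd:
  fixes f g :: "real \<Rightarrow> real"
  assumes lohi: "lo \<le> hi" and L: "L > 0" and f01: "\<And>z. z \<in> {lo..hi} \<Longrightarrow> f z \<in> {0,1}"
    and ic: "\<And>c z. c \<in> {lo..hi} \<Longrightarrow> z \<in> {lo..hi} \<Longrightarrow> g z + (z-c)*L*f z \<le> g c"
  shows "antimono_on {lo..hi} f \<and> (\<forall>c\<in>{lo..hi}. g c = L * integral {c..hi} f + g hi)"
proof -
  have mono: "antimono_on {lo..hi} f"
  proof (rule monotone_onI)
    fix c z assume c: "c \<in> {lo..hi}" and z: "z \<in> {lo..hi}" and cz: "c \<le> z"
    show "f z \<le> f c"
    proof (cases "c = z")
      case False
      hence pos: "(z - c) * L > 0" using cz L by simp
      have "(z - c) * L * (f z - f c) \<le> 0"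
        using ic[OF c z] ic[OF z c] by (simp add: algebra_simps)
      hence "f z - f c \<le> 0" using mult_pos_pos[OF pos, of "f z - f c"] by linarith
      thus ?thesis by simp
    qed simp
  qed
  obtain t where t: "t \<in> {lo..hi}" and t1: "\<forall>z\<in>{lo..hi}. z < t \<longrightarrow> f z = 1"
      and t0: "\<forall>z\<in>{lo..hi}. t < z \<longrightarrow> f z = 0"
    using threshold[OF lohi f01 mono] by blast
  have hi: "hi \<in> {lo..hi}" using lohi by simp
  have s1: "g c = g hi" if c: "c \<in> {lo..hi}" and tc: "t < c" for c
  proof -
    have "f c = 0" "f hi = 0" using t0 c tc hi by auto
    thus ?thesis using ic[OF c hi] ic[OF hi c] by simp
  qed
  have s2: "g t = g hi"
  proof (cases "t = hi")
    case False
    hence th: "t < hi" using t by simp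
    have "f hi = 0" using t0 hi th by auto
    hence ge: "g hi \<le> g t" using ic[OF t hi] by simp
    have "g t - g hi \<le> 0"
    proof (rule eps_le[of "hi - t" L])
      fix e assume e: "0 < e" "e < hi - t"
      have z: "t + e \<in> {lo..hi}" using e t by auto
      have gz: "g (t+e) = g hi" using s1[OF z] e by simp
      have "g t + (t - (t+e))*L*f t \<le> g (t+e)" using ic[OF z t] .
      hence B: "g t - (e*L)*f t \<le> g hi" using gz by (simp add: algebra_simps)
      have "(e*L)*f t \<le> L * e" using f01[OF t] L e by auto
      thus "g t - g hi \<le> L * e" using B by linarith
    qed (use th L in auto)
    thus ?thesis using ge by simp
  qed simp
  have s3: "g c = g t + (t - c) * L" if c: "c \<in> {lo..hi}" and ct: "c < t" for c
  proof -
    have fc: "f c = 1" using t1 c ct by auto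
    have le: "g c \<le> g t + (t - c) * L" using ic[OF t c] fc by (simp add: algebra_simps)
    have "g t + (t - c) * L - g c \<le> 0"
    proof (rule eps_le[of "t - c" L])
      fix e assume e: "0 < e" "e < t - c"
      have z: "t - e \<in> {lo..hi}" using e t c by auto
      have fz: "f (t - e) = 1" using t1 z e by auto
      have A: "g (t-e) + (t - e - c)*L \<le> g c" using ic[OF c z] fz by simp
      have B: "g t + (t - (t-e))*L*f t \<le> g (t-e)" using ic[OF z t] .
      have "(t - (t-e))*L*f t \<ge> 0" using f01[OF t] e L by auto
      hence "g t \<le> g (t-e)" using B by linarith
      thus "g t + (t - c) * L - g c \<le> L * e" using A by (simp add: algebra_simps)
    qed (use ct L in auto)
    thus ?thesis using le by simp
  qed
  have "g c = L * integral {c..hi} f + g hi" if c: "c \<in> {lo..hi}" for c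
  proof -
    have I: "integral {c..hi} f = max 0 (t - c)" using integral_thr[OF t t1 t0 c] .
    consider "c < t" | "c = t" | "t < c" by linarith
    thus ?thesis
    proof cases
      case 1
      hence "integral {c..hi} f = t - c" using I by simp
      hence "L * integral {c..hi} f = (t - c) * L" by simp
      thus ?thesis using s3[OF c 1] s2 by linarith
    next
      case 2 thus ?thesis using s2 I by simp
    next
      case 3 thus ?thesis using s1[OF c 3] I by simp
    qed
  qed
  thus ?thesis using mono by blast
qed

lemma key_bwd:
  fixes f g :: "real \<Rightarrow> real"
  assumes lohi: "lo \<le> hi" and L: "L \<ge> 0" and f01: "\<And>z. z \<in> {lo..hi} \<Longrightarrow> f z \<in> {0,1}"
    and mono: "antimono_on {lo..hi} f"
    and gf: "\<And>c. c \<in> {lo..hi} \<Longrightarrow> g c = L * integral {c..hi} f + U"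
    and c: "c \<in> {lo..hi}" and z: "z \<in> {lo..hi}"
  shows "g z + (z-c)*L*f z \<le> g c"
proof -
  obtain t where t: "t \<in> {lo..hi}" and t1: "\<forall>z\<in>{lo..hi}. z < t \<longrightarrow> f z = 1"
      and t0: "\<forall>z\<in>{lo..hi}. t < z \<longrightarrow> f z = 0"
    using threshold[OF lohi f01 mono] by blast
  have gc: "g c = L * max 0 (t - c) + U" using gf[OF c] integral_thr[OF t t1 t0 c] by simp
  have gz: "g z = L * max 0 (t - z) + U" using gf[OF z] integral_thr[OF t t1 t0 z] by simp
  have key: "max 0 (t - z) + (z - c) * f z \<le> max 0 (t - c)"
  proof -
    consider "z < t" | "z = t" | "t < z" by linarith
    thus ?thesis
    proof cases
      case 1 thus ?thesis using t1 z by auto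
    next
      case 2 thus ?thesis using f01[OF z] by auto
    next
      case 3 thus ?thesis using t0 z by auto
    qed
  qed
  have "L * (max 0 (t - z) + (z - c) * f z) \<le> L * max 0 (t - c)"
    using mult_left_mono[OF key L] .
  thus ?thesis using gc gz by (simp add: algebra_simps)
qed

theorem theorem1:
  fixes lo hi :: "'a::finite \<Rightarrow> real"
    and lam :: "'a \<Rightarrow> real \<Rightarrow> real"
    and alloc pay :: "'a \<Rightarrow> ('a \<Rightarrow> real) \<Rightarrow> ('a \<Rightarrow> real) \<Rightarrow> real"
  assumes bounds: "\<And>i. lo i \<le> hi i"
    and lam_range: "\<And>i q. 0 < lam i q \<and> lam i q \<le> 1"
    and mech: "auction_mechanism lo hi alloc"
  shows "incentive_compatible lo hi lam alloc pay \<longleftrightarrow>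
    (\<forall>i p c'. cost_profile lo hi c' \<longrightarrow>
       antimono_on {lo i..hi i} (\<lambda>z. alloc i (c'(i := z)) p) \<and>
       (\<exists>U. \<forall>ci \<in> {lo i..hi i}.
          pay i (c'(i := ci)) p =
            adv_value lam i ci (p i) * alloc i (c'(i := ci)) p
            - lam i (p i) * integral {ci..hi i} (\<lambda>z. alloc i (c'(i := z)) p)
            - U))"
proof -
  have cp: "cost_profile lo hi (c'(i := z))" if "cost_profile lo hi c'" "z \<in> {lo i..hi i}" for c' i z
    using that by (auto simp: cost_profile_def)
  have f01: "alloc i (c'(i := z)) p \<in> {0,1}" if "cost_profile lo hi c'" "z \<in> {lo i..hi i}" for c' i z p
    using mech cp[OF that] unfolding auction_mechanism_def by blast
  have ut: "utility lam alloc pay i c (c'(i := z)) p =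
      (adv_value lam i z (p i) * alloc i (c'(i := z)) p - pay i (c'(i := z)) p)
      + (z - c) * lam i (p i) * alloc i (c'(i := z)) p" for i c c' z p
    unfolding utility_def adv_value_def by (simp add: algebra_simps)
  show ?thesis
  proof
    assume IC: "incentive_compatible lo hi lam alloc pay"
    show "\<forall>i p c'. cost_profile lo hi c' \<longrightarrow>
       antimono_on {lo i..hi i} (\<lambda>z. alloc i (c'(i := z)) p) \<and>
       (\<exists>U. \<forall>ci \<in> {lo i..hi i}.
          pay i (c'(i := ci)) p =
            adv_value lam i ci (p i) * alloc i (c'(i := ci)) p
            - lam i (p i) * integral {ci..hi i} (\<lambda>z. alloc i (c'(i := z)) p)
            - U)"
    proof (intro allI impI)
      fix i p c' assume c': "cost_profile lo hi c'"
      define f where "f = (\<lambda>z. alloc i (c'(i := z)) p)"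
      define g where "g = (\<lambda>z. adv_value lam i z (p i) * f z - pay i (c'(i := z)) p)"
      have ic: "g z + (z-c) * lam i (p i) * f z \<le> g c"
        if c: "c \<in> {lo i..hi i}" and z: "z \<in> {lo i..hi i}" for c z
      proof -
        have "utility lam alloc pay i c ((c'(i := z))(i := c)) p \<ge> utility lam alloc pay i c (c'(i := z)) p"
          using IC c cp[OF c' z] unfolding incentive_compatible_def by blast
        thus ?thesis unfolding ut f_def g_def by simp
      qed
      have K: "antimono_on {lo i..hi i} f \<and> (\<forall>c\<in>{lo i..hi i}. g c = lam i (p i) * integral {c..hi i} f + g (hi i))"
        by (rule key_fwd[OF bounds]) (use lam_range f01[OF c'] ic in \<open>auto simp: f_def\<close>)
      show "antimono_on {lo i..hi i} (\<lambda>z. alloc i (c'(i := z)) p) \<and>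
       (\<exists>U. \<forall>ci \<in> {lo i..hi i}.
          pay i (c'(i := ci)) p =
            adv_value lam i ci (p i) * alloc i (c'(i := ci)) p
            - lam i (p i) * integral {ci..hi i} (\<lambda>z. alloc i (c'(i := z)) p)
            - U)"
      proof
        show "antimono_on {lo i..hi i} (\<lambda>z. alloc i (c'(i := z)) p)" using K f_def by simp
        show "\<exists>U. \<forall>ci \<in> {lo i..hi i}.
          pay i (c'(i := ci)) p =
            adv_value lam i ci (p i) * alloc i (c'(i := ci)) p
            - lam i (p i) * integral {ci..hi i} (\<lambda>z. alloc i (c'(i := z)) p)
            - U"
          using K by (intro exI[of _ "g (hi i)"]) (auto simp: g_def f_def algebra_simps)
      qed
    qed
  next
    assume R: "\<forall>i p c'. cost_profile lo hi c' \<longrightarrow>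
       antimono_on {lo i..hi i} (\<lambda>z. alloc i (c'(i := z)) p) \<and>
       (\<exists>U. \<forall>ci \<in> {lo i..hi i}.
          pay i (c'(i := ci)) p =
            adv_value lam i ci (p i) * alloc i (c'(i := ci)) p
            - lam i (p i) * integral {ci..hi i} (\<lambda>z. alloc i (c'(i := z)) p)
            - U)"
    show "incentive_compatible lo hi lam alloc pay"
      unfolding incentive_compatible_def
    proof (intro allI impI)
      fix i ci p c' assume ci: "ci \<in> {lo i..hi i}" and c': "cost_profile lo hi c'"
      define f where "f = (\<lambda>z. alloc i (c'(i := z)) p)"
      define g where "g = (\<lambda>z. adv_value lam i z (p i) * f z - pay i (c'(i := z)) p)"
      obtain U where mono: "antimono_on {lo i..hi i} f" and
        U: "\<forall>ci \<in> {lo i..hi i}.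
          pay i (c'(i := ci)) p =
            adv_value lam i ci (p i) * alloc i (c'(i := ci)) p
            - lam i (p i) * integral {ci..hi i} (\<lambda>z. alloc i (c'(i := z)) p)
            - U"
        using R c' unfolding f_def by blast
      have gf: "g c = lam i (p i) * integral {c..hi i} f + U" if "c \<in> {lo i..hi i}" for c
        using U that unfolding g_def f_def by auto
      have z: "c' i \<in> {lo i..hi i}" using c' by (auto simp: cost_profile_def)
      have "g (c' i) + (c' i - ci) * lam i (p i) * f (c' i) \<le> g ci"
        by (rule key_bwd[OF bounds _ _ mono gf ci z]) (use lam_range f01[OF c'] in \<open>auto simp: f_def less_imp_le\<close>)
      moreover have "c'(i := c' i) = c'" by simp
      ultimately show "utility lam alloc pay i ci c' p \<le> utility lam alloc pay i ci (c'(i := ci)) p"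
        using ut[of i ci c' "c' i" p] ut[of i ci c' ci p] unfolding g_def f_def by simp
    qed
  qed
qed

end
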